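(* Let $a,x\in \mathcal{A}$. Then the following are equivalent: (1) $x$ is the $w$-weighted core inverse of $a$. (2) $xwawx=x$, $(wawx)^*=wawx$, $x\mathcal{A}=(aw)\mathcal{A}$, $x^*\mathcal{A}=(waw)\mathcal{A}$. (3) $xwawx=x$, $(wawx)^*=wawx$, ${}^0(x)={}^0(aw)$, ${}^0(x^* )={}^0(waw)$. (4) $xwawx=x$, $(wawx)^*=wawx$, ${}^0(x)={}^0(aw)$, ${}^0(x^* )\subseteq {}^0(waw)$.
   Context: $\mathcal{A}$ is a complex Banach *-algebra with identity and $w\in\mathcal{A}$. The $w$-weighted core inverse of $a$ is the unique $x$ with $a(wx)^2=x$, $(wawx)^*=wawx$, $xw(aw)^2=aw$. ${}^0(b)=\{y\in\mathcal{A}: yb=0\}$ is the left annihilator of $b$. *)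

theory Defs
  imports "HOL-Analysis.Analysis"
begin

text \<open>HOL has no complex-vector-space class, so complex scalar multiplication
  is added as an operation compatible with the real one.\<close>

class complex_banach_star_algebra = real_normed_algebra_1 + banach +
  fixes scaleC :: "complex \<Rightarrow> 'a \<Rightarrow> 'a" (infixr \<open>*\<^sub>C\<close> 75)
    and invol :: "'a \<Rightarrow> 'a"
  assumes scaleC_add_right: "c *\<^sub>C (x + y) = c *\<^sub>C x + c *\<^sub>C y"
    and scaleC_add_left: "(b + c) *\<^sub>C x = b *\<^sub>C x + c *\<^sub>C x"
    and scaleC_scaleC: "b *\<^sub>C (c *\<^sub>C x) = (b * c) *\<^sub>C x"
    and scaleC_one: "1 *\<^sub>C x = x"
    and scaleC_of_real: "(complex_of_real r) *\<^sub>C x = r *\<^sub>R x"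
    and scaleC_mult_left: "(c *\<^sub>C x) * y = c *\<^sub>C (x * y)"
    and scaleC_mult_right: "x * (c *\<^sub>C y) = c *\<^sub>C (x * y)"
    and norm_scaleC: "norm (c *\<^sub>C x) = cmod c * norm x"
    and invol_invol: "invol (invol x) = x"
    and invol_add: "invol (x + y) = invol x + invol y"
    and invol_scaleC: "invol (c *\<^sub>C x) = cnj c *\<^sub>C invol x"
    and invol_mult: "invol (x * y) = invol y * invol x"
    and norm_invol: "norm (invol x) = norm x"

definition right_ideal :: "'a::complex_banach_star_algebra \<Rightarrow> 'a set" where
  "right_ideal b = {b * y | y. True}"

definition left_annihilator :: "'a::complex_banach_star_algebra \<Rightarrow> 'a set" where
  "left_annihilator b = {y. y * b = 0}"

definition w_core_inverse :: "'a::complex_banach_star_algebra \<Rightarrow> 'a \<Rightarrow> 'a \<Rightarrow> bool" where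
  "w_core_inverse w a x \<longleftrightarrow>
     a * (w * x) ^ 2 = x \<and>
     invol (w * a * w * x) = w * a * w * x \<and>
     x * w * (a * w) ^ 2 = a * w"

end

theory Submission
  imports Defs
begin

lemma invol_zero: "invol (0::'a::complex_banach_star_algebra) = 0"
proof -
  have "invol (0::'a) = invol 0 + invol 0" by (metis add_0 invol_add)
  then show ?thesis by simp
qed

lemma invol_one: "invol (1::'a::complex_banach_star_algebra) = 1"
  by (metis invol_invol invol_mult mult_1_left mult_1_right)

lemma invol_minus: "invol ((x::'a::complex_banach_star_algebra) - y) = invol x - invol y"
  by (metis add_diff_cancel_right' diff_add_cancel invol_add)

lemma ri_eq:
  fixes b c :: "'a::complex_banach_star_algebra"
  assumes "b = c * u" "c = b * v"
  shows "right_ideal b = right_ideal c"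
  unfolding right_ideal_def
proof (intro equalityI subsetI)
  fix z assume "z \<in> {b * y |y. True}"
  then obtain y where "z = b * y" by auto
  then have "z = c * (u * y)" using assms(1) by (simp add: mult.assoc)
  then show "z \<in> {c * y |y. True}" by auto
next
  fix z assume "z \<in> {c * y |y. True}"
  then obtain y where "z = c * y" by auto
  then have "z = b * (v * y)" using assms(2) by (simp add: mult.assoc)
  then show "z \<in> {b * y |y. True}" by auto
qed

lemma ri_la:
  fixes b c :: "'a::complex_banach_star_algebra"
  assumes "right_ideal b = right_ideal c"
  shows "left_annihilator b = left_annihilator c"
proof -
  have "c \<in> right_ideal c" unfolding right_ideal_def
    by (metis (mono_tags, lifting) mem_Collect_eq mult_1_right)
  then have "c \<in> right_ideal b" using assms by simp
  then obtain u where u: "c = b * u" unfolding right_ideal_def by auto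
  have "b \<in> right_ideal b" unfolding right_ideal_def
    by (metis (mono_tags, lifting) mem_Collect_eq mult_1_right)
  then have "b \<in> right_ideal c" using assms by simp
  then obtain v where v: "b = c * v" unfolding right_ideal_def by auto
  show ?thesis unfolding left_annihilator_def
  proof (intro equalityI subsetI; simp)
    fix y assume "y * b = 0"
    then show "y * c = 0" using u by (metis mult.assoc mult_zero_left)
  next
    fix y assume "y * c = 0"
    then show "y * b = 0" using v by (metis mult.assoc mult_zero_left)
  qed
qed

lemma la_sub:
  fixes b c y :: "'a::complex_banach_star_algebra"
  assumes "left_annihilator b \<subseteq> left_annihilator c" "y * b = 0"
  shows "y * c = 0"
  using assms unfolding left_annihilator_def by auto

lemma one_two:
  fixes w a x :: "'a::complex_banach_star_algebra"
  assumes "w_core_inverse w a x"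
  shows "x * w * a * w * x = x \<and> invol (w * a * w * x) = w * a * w * x \<and>
          right_ideal x = right_ideal (a * w) \<and> right_ideal (invol x) = right_ideal (w * a * w)"
proof -
  have h1: "a * w * x * w * x = x" and h2: "invol (w * a * w * x) = w * a * w * x"
    and h3: "x * w * a * w * (a * w) = a * w"
    using assms unfolding w_core_inverse_def by (auto simp: power2_eq_square mult.assoc)
  have "x * w * a * w * x = x * w * a * w * (a * w * x * w * x)" using h1 by simp
  also have "\<dots> = (x * w * a * w * (a * w)) * x * w * x" by (simp add: mult.assoc)
  also have "\<dots> = a * w * x * w * x" using h3 by simp
  also have "\<dots> = x" by (rule h1)
  finally have f1: "x * w * a * w * x = x" .
  have "a * w = x * w * a * w * (a * w)" using h3 by simp
  also have "\<dots> = (a * w * x * w * x) * w * a * w * (a * w)" using h1 by simp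
  also have "\<dots> = a * w * x * w * (x * w * a * w * (a * w))" by (simp add: mult.assoc)
  also have "\<dots> = a * w * x * w * (a * w)" using h3 by simp
  finally have f4: "a * w * x * w * (a * w) = a * w" by simp
  have i1: "right_ideal x = right_ideal (a * w)"
    by (rule ri_eq[of _ _ "x * w * x" "w * a * w * a * w"])
      (use h1 in \<open>simp add: mult.assoc\<close>, use h3 in \<open>simp add: mult.assoc\<close>)
  have "invol x = invol (x * (w * a * w * x))" using f1 by (simp add: mult.assoc)
  also have "\<dots> = invol (w * a * w * x) * invol x" by (rule invol_mult)
  also have "\<dots> = w * a * w * x * invol x" using h2 by simp
  finally have px: "w * a * w * x * invol x = invol x" by simp
  have g: "w * a * w * x * (w * a * w) = w * a * w" using f4 by (simp add: mult.assoc)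
  have ii: "invol x * invol (w * a * w) = w * a * w * x"
    using h2 invol_mult[of "w * a * w" x] by simp
  have i2: "right_ideal (invol x) = right_ideal (w * a * w)"
    by (rule ri_eq[of _ _ "x * invol x" "invol (w * a * w) * (w * a * w)"])
      (use px in \<open>simp add: mult.assoc\<close>, use g ii in \<open>simp add: mult.assoc[symmetric]\<close>)
  show ?thesis using f1 h2 i1 i2 by simp
qed

lemma four_one:
  fixes w a x :: "'a::complex_banach_star_algebra"
  assumes f1: "x * w * a * w * x = x" and h2: "invol (w * a * w * x) = w * a * w * x"
    and l1: "left_annihilator x = left_annihilator (a * w)"
    and l2: "left_annihilator (invol x) \<subseteq> left_annihilator (w * a * w)"
  shows "w_core_inverse w a x"
proof -
  have "(1 - x * w * a * w) * x = 0" by (simp add: left_diff_distrib f1)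
  then have "(1 - x * w * a * w) * (a * w) = 0"
    using l1 la_sub by blast
  then have F3: "x * w * a * w * (a * w) = a * w" by (simp add: left_diff_distrib)
  have "invol x = invol (x * (w * a * w * x))" using f1 by (simp add: mult.assoc)
  also have "\<dots> = invol (w * a * w * x) * invol x" by (rule invol_mult)
  also have "\<dots> = w * a * w * x * invol x" using h2 by simp
  finally have px: "w * a * w * x * invol x = invol x" by simp
  have "(1 - w * a * w * x) * invol x = 0" by (simp add: left_diff_distrib px)
  then have "(1 - w * a * w * x) * (w * a * w) = 0" using l2 la_sub by blast
  then have G: "w * a * w * x * (w * a * w) = w * a * w" by (simp add: left_diff_distrib)
  define t where "t = a * w - a * w * x * w * a * w"
  have "w * t = w * a * w - w * a * w * x * (w * a * w)"
    by (simp add: t_def right_diff_distrib mult.assoc)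
  also have "\<dots> = 0" using G by simp
  finally have wt: "w * t = 0" .
  have "x * w * a * w * t = x * w * a * w * (a * w) - x * w * a * w * (a * w) * (x * w * a * w)"
    by (simp add: t_def right_diff_distrib mult.assoc)
  also have "x * w * a * w * (a * w) * (x * w * a * w) = a * w * (x * w * a * w)"
    using F3 by simp
  also have "x * w * a * w * (a * w) - a * w * (x * w * a * w) = t"
    using F3 by (simp add: t_def mult.assoc)
  finally have qt: "x * w * a * w * t = t" .
  have "x * w * a * w * t = x * w * a * (w * t)" by (simp add: mult.assoc)
  then have "t = 0" using qt wt by simp
  then have "(1 - a * w * x * w) * (a * w) = 0" unfolding t_def
    by (simp add: left_diff_distrib mult.assoc)
  then have "(1 - a * w * x * w) * x = 0" using l1 la_sub by blast
  then have F2: "a * w * x * w * x = x" by (simp add: left_diff_distrib)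
  show ?thesis unfolding w_core_inverse_def using F2 F3 h2
    by (simp add: power2_eq_square mult.assoc)
qed

theorem theorem2p1:
  fixes w a x :: "'a::complex_banach_star_algebra"
  shows "(w_core_inverse w a x
     \<longleftrightarrow> (x * w * a * w * x = x \<and> invol (w * a * w * x) = w * a * w * x \<and>
          right_ideal x = right_ideal (a * w) \<and> right_ideal (invol x) = right_ideal (w * a * w)))
   \<and> (w_core_inverse w a x
     \<longleftrightarrow> (x * w * a * w * x = x \<and> invol (w * a * w * x) = w * a * w * x \<and>
          left_annihilator x = left_annihilator (a * w) \<and>
          left_annihilator (invol x) = left_annihilator (w * a * w)))
   \<and> (w_core_inverse w a x
     \<longleftrightarrow> (x * w * a * w * x = x \<and> invol (w * a * w * x) = w * a * w * x \<and>
          left_annihilator x = left_annihilator (a * w) \<and>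
          left_annihilator (invol x) \<subseteq> left_annihilator (w * a * w)))"
proof -
  have A: "w_core_inverse w a x \<Longrightarrow> x * w * a * w * x = x \<and> invol (w * a * w * x) = w * a * w * x \<and>
          right_ideal x = right_ideal (a * w) \<and> right_ideal (invol x) = right_ideal (w * a * w)"
    by (rule one_two)
  have B: "right_ideal x = right_ideal (a * w) \<Longrightarrow> left_annihilator x = left_annihilator (a * w)"
    by (rule ri_la)
  have C: "right_ideal (invol x) = right_ideal (w * a * w) \<Longrightarrow> left_annihilator (invol x) = left_annihilator (w * a * w)"
    by (rule ri_la)
  have D: "x * w * a * w * x = x \<Longrightarrow> invol (w * a * w * x) = w * a * w * x \<Longrightarrow>
     left_annihilator x = left_annihilator (a * w) \<Longrightarrow>
     left_annihilator (invol x) \<subseteq> left_annihilator (w * a * w) \<Longrightarrow> w_core_inverse w a x"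
    by (rule four_one)
  show ?thesis using A B C D by blast
qed

end
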